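(* Let $(N,\langle\cdot,\cdot\rangle,\varphi)$ be a modified $H$-type group (see context), with $m=\dim\mathfrak v$. For all $e,e'\in\mathfrak v$ and $z,z'\in\mathfrak z$ the Ricci tensor satisfies $$\mathrm{Ric}(e,z)=0,\qquad \mathrm{Ric}(e,e')=-\tfrac{\xi}{2}\langle e,e'\rangle,\qquad \mathrm{Ric}(z,z')=\tfrac m4\langle z,z'\rangle_\varphi .$$
   Context: Let $N$ be a 2-step nilpotent real Lie group with Lie algebra $\mathfrak n$, Lie bracket $[\cdot,\cdot]$ and center $\mathfrak z$, endowed with a left-invariant pseudo-Riemannian metric $\langle\cdot,\cdot\rangle$ (identified with an inner product on $\mathfrak n$) for which $\mathfrak z$ is nondegenerate. Put $\mathfrak v=\mathfrak z^\perp$. For $z\in\mathfrak z$ define $j(z)\in\mathrm{End}(\mathfrak v)$ by $\langle [x,y],z\rangle=\langle y,j(z)x\rangle$ for all $x,y\in\mathfrak v$. Given a quadratic form $\varphi$ on $\mathfrak z$, $(N,\langle\cdot,\cdot\rangle,\varphi)$ is a modified $H$-type group if $j(z)^2=-\varphi(z)\,\mathrm{Id}_{\mathfrak v}$ for all $z\in\mathfrak z$ (equivalently $\langle j(z)x,j(z)y\rangle=\varphi(z)\langle x,y\rangle$). $\langle\cdot,\cdot\rangle_\varphi$ denotes the symmetric bilinear form on $\mathfrak z$ obtained by polarizing $\varphi$ (so $\langle z,z\rangle_\varphi=\varphi(z)$). Let $\{z_1,\dots,z_p\}$ be a pseudo-orthonormal basis of $\mathfrak z$ and set $\xi=\sum_{k=1}^p\langle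 z_k,z_k\rangle\,\varphi(z_k)$ (independent of the basis). $\mathrm{Ric}$ is the Ricci tensor of the Levi-Civita connection. *)

theory Defs
  imports "HOL-Analysis.Analysis"
begin

text \<open>The Lie algebra n is modelled as a finite-dimensional real vector space 'a
  (class euclidean_space; its built-in Euclidean inner product is used ONLY to
  compute traces, which are basis independent).\<close>

definition lie_bracket :: "('a::real_vector \<Rightarrow> 'a \<Rightarrow> 'a) \<Rightarrow> bool" where
  "lie_bracket br \<longleftrightarrow> bilinear br \<and> (\<forall>x. br x x = 0) \<and>
     (\<forall>x y w. br x (br y w) + br y (br w x) + br w (br x y) = 0)"

definition two_step_nilpotent :: "('a::real_vector \<Rightarrow> 'a \<Rightarrow> 'a) \<Rightarrow> bool" where
  "two_step_nilpotent br \<longleftrightarrow> lie_bracket br \<and> (\<exists>x y. br x y \<noteq> 0) \<and>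
     (\<forall>x y w. br (br x y) w = 0)"

definition lie_center :: "('a::real_vector \<Rightarrow> 'a \<Rightarrow> 'a) \<Rightarrow> 'a set" where
  "lie_center br = {x. \<forall>y. br x y = 0}"

definition g_orth :: "('a \<Rightarrow> 'a \<Rightarrow> real) \<Rightarrow> 'a set \<Rightarrow> 'a set" where
  "g_orth g S = {x. \<forall>y\<in>S. g x y = 0}"

definition nondegenerate_on :: "('a::real_vector \<Rightarrow> 'a \<Rightarrow> real) \<Rightarrow> 'a set \<Rightarrow> bool" where
  "nondegenerate_on g S \<longleftrightarrow> (\<forall>x\<in>S. (\<forall>y\<in>S. g x y = 0) \<longrightarrow> x = 0)"

definition scalar_product :: "('a::real_vector \<Rightarrow> 'a \<Rightarrow> real) \<Rightarrow> bool" where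
  "scalar_product g \<longleftrightarrow> bilinear g \<and> (\<forall>x y. g x y = g y x) \<and> nondegenerate_on g UNIV"

text \<open>Levi-Civita connection on left-invariant fields, via the Koszul formula
  2 g(nabla_x y, w) = g([x,y],w) - g([y,w],x) + g([w,x],y).\<close>
definition lc_nabla :: "('a::real_vector \<Rightarrow> 'a \<Rightarrow> real) \<Rightarrow> ('a \<Rightarrow> 'a \<Rightarrow> 'a) \<Rightarrow> 'a \<Rightarrow> 'a \<Rightarrow> 'a" where
  "lc_nabla g br x y = (THE u. \<forall>w. 2 * g u w = g (br x y) w - g (br y w) x + g (br w x) y)"

definition curv :: "('a::real_vector \<Rightarrow> 'a \<Rightarrow> real) \<Rightarrow> ('a \<Rightarrow> 'a \<Rightarrow> 'a) \<Rightarrow> 'a \<Rightarrow> 'a \<Rightarrow> 'a \<Rightarrow> 'a" where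
  "curv g br x y w = lc_nabla g br x (lc_nabla g br y w) - lc_nabla g br y (lc_nabla g br x w)
      - lc_nabla g br (br x y) w"

definition ricci :: "('a::euclidean_space \<Rightarrow> 'a \<Rightarrow> real) \<Rightarrow> ('a \<Rightarrow> 'a \<Rightarrow> 'a) \<Rightarrow> 'a \<Rightarrow> 'a \<Rightarrow> real" where
  "ricci g br x y = (\<Sum>b\<in>Basis. inner (curv g br b x y) b)"

definition jmap :: "('a::real_vector \<Rightarrow> 'a \<Rightarrow> real) \<Rightarrow> ('a \<Rightarrow> 'a \<Rightarrow> 'a) \<Rightarrow> 'a \<Rightarrow> 'a \<Rightarrow> 'a" where
  "jmap g br z x = (THE u. u \<in> g_orth g (lie_center br) \<and>
      (\<forall>y\<in>g_orth g (lie_center br). g (br x y) z = g y u))"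

definition quadratic_form_on :: "'a::real_vector set \<Rightarrow> ('a \<Rightarrow> real) \<Rightarrow> bool" where
  "quadratic_form_on Z \<phi> \<longleftrightarrow> (\<exists>B. bilinear B \<and> (\<forall>x y. B x y = (B y x :: real)) \<and> (\<forall>z\<in>Z. \<phi> z = B z z))"

definition polar :: "('a::real_vector \<Rightarrow> real) \<Rightarrow> 'a \<Rightarrow> 'a \<Rightarrow> real" where
  "polar \<phi> z z' = (\<phi> (z + z') - \<phi> z - \<phi> z') / 2"

definition modified_H_type :: "('a::real_vector \<Rightarrow> 'a \<Rightarrow> real) \<Rightarrow> ('a \<Rightarrow> 'a \<Rightarrow> 'a) \<Rightarrow> ('a \<Rightarrow> real) \<Rightarrow> bool" where
  "modified_H_type g br \<phi> \<longleftrightarrow> two_step_nilpotent br \<and> scalar_product g \<and>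
     nondegenerate_on g (lie_center br) \<and> quadratic_form_on (lie_center br) \<phi> \<and>
     (\<forall>z\<in>lie_center br. \<forall>x\<in>g_orth g (lie_center br). jmap g br z (jmap g br z x) = - (\<phi> z *\<^sub>R x))"

definition pseudo_orthonormal_basis :: "('a::real_vector \<Rightarrow> 'a \<Rightarrow> real) \<Rightarrow> 'a set \<Rightarrow> 'a set \<Rightarrow> bool" where
  "pseudo_orthonormal_basis g S B \<longleftrightarrow> finite B \<and> B \<subseteq> S \<and> independent B \<and> span B = S \<and>
     (\<forall>b\<in>B. g b b = 1 \<or> g b b = -1) \<and> (\<forall>b\<in>B. \<forall>b'\<in>B. b \<noteq> b' \<longrightarrow> g b b' = 0)"

end

theory Submission
  imports Defs
begin

locale mh =
  fixes g :: "'a::euclidean_space \<Rightarrow> 'a \<Rightarrow> real" and br :: "'a \<Rightarrow> 'a \<Rightarrow> 'a"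
    and \<phi> :: "'a \<Rightarrow> real" and zb :: "'a set"
  assumes H: "modified_H_type g br \<phi>"
    and BZ: "pseudo_orthonormal_basis g (lie_center br) zb"
begin

abbreviation "Z \<equiv> lie_center br"
abbreviation "V \<equiv> g_orth g (lie_center br)"

lemma gbil: "bilinear g" and gsym: "g x y = g y x" and gnd: "(\<And>y. g x y = 0) \<Longrightarrow> x = 0"
  using H unfolding modified_H_type_def scalar_product_def nondegenerate_on_def by auto

lemma brbil: "bilinear br" and brxx: "br x x = 0" and brbr: "br (br x y) w = 0"
  using H unfolding modified_H_type_def two_step_nilpotent_def lie_bracket_def by auto

lemma g_simps[simp]:
  "g (x + y) w = g x w + g y w" "g x (y + w) = g x y + g x w"
  "g (x - y) w = g x w - g y w" "g x (y - w) = g x y - g x w"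
  "g (- x) w = - g x w" "g x (- w) = - g x w"
  "g (c *\<^sub>R x) w = c * g x w" "g x (c *\<^sub>R w) = c * g x w"
  "g 0 w = 0" "g x 0 = 0"
  using gbil by (simp_all add: bilinear_ladd bilinear_radd bilinear_lsub bilinear_rsub
    bilinear_lneg bilinear_rneg bilinear_lmul bilinear_rmul bilinear_lzero bilinear_rzero)

lemma g_sum[simp]: "g (sum f A) w = (\<Sum>a\<in>A. g (f a) w)" "g w (sum f A) = (\<Sum>a\<in>A. g w (f a))"
proof -
  have "linear (\<lambda>x. g x w)" "linear (\<lambda>x. g w x)" using gbil unfolding bilinear_def by auto
  then show "g (sum f A) w = (\<Sum>a\<in>A. g (f a) w)" "g w (sum f A) = (\<Sum>a\<in>A. g w (f a))"
    using linear_sum[OF \<open>linear (\<lambda>x. g x w)\<close>, of f A] linear_sum[OF \<open>linear (\<lambda>x. g w x)\<close>, of f A]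
    by simp_all
qed

lemma br_simps[simp]:
  "br (x + y) w = br x w + br y w" "br x (y + w) = br x y + br x w"
  "br (x - y) w = br x w - br y w" "br x (y - w) = br x y - br x w"
  "br (- x) w = - br x w" "br x (- w) = - br x w"
  "br (c *\<^sub>R x) w = c *\<^sub>R br x w" "br x (c *\<^sub>R w) = c *\<^sub>R br x w"
  "br 0 w = 0" "br x 0 = 0"
  using brbil by (simp_all add: bilinear_ladd bilinear_radd bilinear_lsub bilinear_rsub
    bilinear_lneg bilinear_rneg bilinear_lmul bilinear_rmul bilinear_lzero bilinear_rzero)

lemma br_anti: "br y x = - br x y"
proof -
  have "br (x + y) (x + y) = br x y + br y x" by (simp add: brxx[of x] brxx[of y])
  then have "br x y + br y x = 0" by (simp only: brxx)
  then show ?thesis by (metis add.commute eq_neg_iff_add_eq_0)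
qed

lemma Z_left[simp]: "c \<in> Z \<Longrightarrow> br c y = 0" by (simp add: lie_center_def)
lemma Z_right[simp]: "c \<in> Z \<Longrightarrow> br y c = 0" by (metis Z_left br_anti neg_0_equal_iff_equal)
lemma br_Z[simp]: "br x y \<in> Z" unfolding lie_center_def using brbr by blast
lemma br_br2[simp]: "br w (br x y) = 0" by simp

lemma subspace_Z: "subspace Z"
  unfolding subspace_def lie_center_def using br_simps by auto

lemma zbprops: "finite zb" "zb \<subseteq> Z" "independent zb" "span zb = Z"
  "\<And>b. b \<in> zb \<Longrightarrow> g b b = 1 \<or> g b b = -1" "\<And>b b'. b \<in> zb \<Longrightarrow> b' \<in> zb \<Longrightarrow> b \<noteq> b' \<Longrightarrow> g b b' = 0"
  using BZ unfolding pseudo_orthonormal_basis_def by auto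

lemma zb_sq: "b \<in> zb \<Longrightarrow> g b b * g b b = 1"
  using zbprops(5)[of b] by auto

lemma zbZ[simp]: "b \<in> zb \<Longrightarrow> b \<in> Z" using zbprops(2) by auto

lemma ndZ: "c \<in> Z \<Longrightarrow> (\<And>y. y \<in> Z \<Longrightarrow> g c y = 0) \<Longrightarrow> c = 0"
proof -
  have "nondegenerate_on g Z" using H by (simp add: modified_H_type_def)
  then show "c \<in> Z \<Longrightarrow> (\<And>y. y \<in> Z \<Longrightarrow> g c y = 0) \<Longrightarrow> c = 0"
    unfolding nondegenerate_on_def by blast
qed

definition Pz :: "'a \<Rightarrow> 'a" where "Pz x = (\<Sum>k\<in>zb. (g x k * g k k) *\<^sub>R k)"

lemma Pz_linear: "linear Pz"
  unfolding Pz_def by (rule linearI) (simp_all add: sum.distrib scaleR_add_left scaleR_sum_right algebra_simps)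

lemma Pz_simps[simp]: "Pz (x + y) = Pz x + Pz y" "Pz (x - y) = Pz x - Pz y" "Pz (- x) = - Pz x"
  "Pz (c *\<^sub>R x) = c *\<^sub>R Pz x" "Pz 0 = 0"
  using Pz_linear by (simp_all add: linear_add linear_diff linear_neg linear_scale linear_0)

lemma Pz_Z[simp]: "Pz x \<in> Z"
proof -
  have "Pz x \<in> span zb" unfolding Pz_def
    by (intro span_sum span_scale span_base)
  then show ?thesis using zbprops(4) by simp
qed

lemma g_Pz_zb: "k \<in> zb \<Longrightarrow> g (Pz x) k = g x k"
proof -
  assume k: "k \<in> zb"
  have "g (Pz x) k = (\<Sum>j\<in>zb. g x j * g j j * g j k)" by (simp add: Pz_def)
  also have "\<dots> = g x k * g k k * g k k"
    by (rule sum.remove[OF zbprops(1) k, THEN trans]) (use zbprops(6)[OF _ k] in \<open>auto intro!: sum.neutral\<close>)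
  finally show ?thesis using zb_sq[OF k] by simp
qed

lemma g_Pv_Z: "c \<in> Z \<Longrightarrow> g (x - Pz x) c = 0"
proof -
  assume "c \<in> Z"
  then have "c \<in> span zb" using zbprops(4) by simp
  then show ?thesis
  proof (induction rule: span_induct)
    case base
    show ?case unfolding subspace_def by simp
  next
    case (step k) then show ?case by (simp add: g_Pz_zb)
  qed
qed

lemma Pv_V[simp]: "x - Pz x \<in> V"
  unfolding g_orth_def using g_Pv_Z by blast

lemma Pz_on_Z[simp]: "c \<in> Z \<Longrightarrow> Pz c = c"
proof -
  assume c: "c \<in> Z"
  have "c - Pz c \<in> Z" using c subspace_Z Pz_Z by (simp add: subspace_diff)
  moreover have "g (c - Pz c) y = 0" if "y \<in> Z" for y by (rule g_Pv_Z[OF that])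
  ultimately have "c - Pz c = 0" by (rule ndZ)
  then show ?thesis by simp
qed

lemma V_Z_g1[simp]: "v \<in> V \<Longrightarrow> c \<in> Z \<Longrightarrow> g v c = 0"
  unfolding g_orth_def by blast
lemma V_Z_g2[simp]: "v \<in> V \<Longrightarrow> c \<in> Z \<Longrightarrow> g c v = 0"
  using V_Z_g1 gsym by metis

lemma Pz_on_V[simp]: "v \<in> V \<Longrightarrow> Pz v = 0"
  unfolding Pz_def by (rule sum.neutral) simp


lemma subspace_V: "subspace V"
  unfolding subspace_def g_orth_def by simp

lemma expand: "linear f \<Longrightarrow> f w = (\<Sum>b\<in>Basis. inner w b * (f b :: real))"
proof -
  assume lf: "linear f"
  have "f w = f (\<Sum>b\<in>Basis. inner w b *\<^sub>R b)" by (simp add: euclidean_representation)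
  also have "\<dots> = (\<Sum>b\<in>Basis. f (inner w b *\<^sub>R b))" by (rule linear_sum[OF lf])
  also have "\<dots> = (\<Sum>b\<in>Basis. inner w b * f b)" by (simp add: linear_scale[OF lf])
  finally show ?thesis .
qed

lemma g_unique: "(\<And>w. g u w = g v w) \<Longrightarrow> u = v"
proof -
  assume "\<And>w. g u w = g v w"
  then have "g (u - v) w = 0" for w by simp
  then show "u = v" using gnd[of "u - v"] by simp
qed

lemma lin_g1: "linear (\<lambda>x. g x w)" and lin_g2: "linear (\<lambda>x. g w x)"
  using gbil unfolding bilinear_def by auto

lemma riesz: "linear f \<Longrightarrow> \<exists>u. \<forall>w. f w = g u w"
proof -
  assume lf: "linear f"
  define M where "M u = (\<Sum>b\<in>Basis. g u b *\<^sub>R b)" for u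
  have Mi: "inner (M u) w = g u w" for u w
  proof -
    have "inner (M u) w = (\<Sum>b\<in>Basis. g u b * inner b w)"
      by (simp add: M_def inner_sum_left)
    also have "\<dots> = g u w" using expand[OF lin_g2[of u], of w] by (simp add: inner_commute mult.commute)
    finally show ?thesis .
  qed
  have lM: "linear M" unfolding M_def
    by (rule linearI) (simp_all add: sum.distrib scaleR_add_left scaleR_sum_right algebra_simps)
  have "inj M"
  proof (rule injI)
    fix u v assume "M u = M v"
    then have "g u w = g v w" for w using Mi by metis
    then show "u = v" by (rule g_unique)
  qed
  then have "surj M" using lM by (simp add: linear_injective_imp_surjective)
  define c where "c = (\<Sum>b\<in>Basis. f b *\<^sub>R b)"
  have ci: "inner c w = f w" for w
    using expand[OF lf, of w] by (simp add: c_def inner_sum_left inner_sum_right inner_commute mult.commute)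
  obtain u where "c = M u" using \<open>surj M\<close> by (metis surjD)
  then have "f w = g u w" for w using ci Mi by metis
  then show ?thesis by blast
qed

lemma J0_ex: "\<exists>u. \<forall>w. g (br x w) \<zeta> = g u w"
proof (rule riesz)
  show "linear (\<lambda>w. g (br x w) \<zeta>)" by (rule linearI) simp_all
qed

abbreviation "J \<equiv> jmap g br"

lemma J_char: "g (J \<zeta> x) w = g (br x w) \<zeta>" and J_V0: "J \<zeta> x \<in> V"
proof -
  obtain u where u: "\<And>w. g (br x w) \<zeta> = g u w" using J0_ex by metis
  have uV: "u \<in> V" unfolding g_orth_def using u[symmetric] by simp
  have "J \<zeta> x = u" unfolding jmap_def
  proof (rule the_equality)
    have "g (br x y) \<zeta> = g y u" for y using u[of y] gsym[of u y] by (rule trans)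
    then show "u \<in> V \<and> (\<forall>y\<in>V. g (br x y) \<zeta> = g y u)" using uV by blast
  next
    fix u' assume a: "u' \<in> V \<and> (\<forall>y\<in>V. g (br x y) \<zeta> = g y u')"
    show "u' = u"
    proof (rule g_unique)
      fix w
      have a1: "g (br x (w - Pz w)) \<zeta> = g (w - Pz w) u'" using a Pv_V by blast
      have a2: "g u' (Pz w) = 0" using a by simp
      have "g u' w = g u' (w - Pz w) + g u' (Pz w)" by simp
      also have "\<dots> = g (w - Pz w) u'" using a2 gsym[of u' "w - Pz w"] by simp
      also have "\<dots> = g (br x w) \<zeta>" using a1 by simp
      finally show "g u' w = g u w" using u by simp
    qed
  qed
  then show "g (J \<zeta> x) w = g (br x w) \<zeta>" "J \<zeta> x \<in> V" using u uV by auto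
qed

lemma J_V[simp]: "J \<zeta> x \<in> V" by (rule J_V0)
lemma Pz_J[simp]: "Pz (J \<zeta> x) = 0" by simp

lemma J_simps[simp]:
  "J (a + b) x = J a x + J b x" "J (a - b) x = J a x - J b x" "J (- a) x = - J a x"
  "J (c *\<^sub>R a) x = c *\<^sub>R J a x" "J 0 x = 0"
  "J a (x + y) = J a x + J a y" "J a (x - y) = J a x - J a y" "J a (- x) = - J a x"
  "J a (c *\<^sub>R x) = c *\<^sub>R J a x" "J a 0 = 0"
  by (rule g_unique; simp add: J_char)+

lemma J_Z[simp]: "y \<in> Z \<Longrightarrow> J a y = 0"
  by (rule g_unique) (simp add: J_char)

lemma J_lin1: "linear (\<lambda>a. J a x)" and J_lin2: "linear (J a)"
  by (rule linearI; simp)+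

lemma J_skew: "g (J a x) w = - g (J a w) x"
  by (simp add: J_char br_anti[of x w])

lemma J_skew2: "g (J a u) w = - g u (J a w)"
  using J_skew[of a u w] gsym[of "J a w" u] by simp

lemma Hj: "z \<in> Z \<Longrightarrow> x \<in> V \<Longrightarrow> J z (J z x) = - (\<phi> z *\<^sub>R x)"
  using H unfolding modified_H_type_def by blast

definition N :: "'a \<Rightarrow> 'a \<Rightarrow> 'a" where
  "N x y = (1/2) *\<^sub>R (br x y - J (Pz y) x - J (Pz x) y)"

lemma nabla: "lc_nabla g br x y = N x y"
proof -
  have key: "2 * g (N x y) w = g (br x y) w - g (br y w) x + g (br w x) y" for w
  proof -
    have 1: "g (br y w) x = g (br y w) (Pz x)"
      using V_Z_g2[OF Pv_V[of x] br_Z[of y w]] by simp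
    have 2: "g (br w x) y = - g (br x w) (Pz y)"
      using V_Z_g2[OF Pv_V[of y] br_Z[of w x]] br_anti[of w x] by simp
    show ?thesis unfolding 1 2 N_def by (simp add: J_char)
  qed
  show ?thesis unfolding lc_nabla_def
  proof (rule the_equality)
    show "\<forall>w. 2 * g (N x y) w = g (br x y) w - g (br y w) x + g (br w x) y" using key by blast
  next
    fix u assume "\<forall>w. 2 * g u w = g (br x y) w - g (br y w) x + g (br w x) y"
    then show "u = N x y" using key by (intro g_unique) (metis mult_left_cancel zero_neq_numeral)
  qed
qed


definition tr :: "('a \<Rightarrow> 'a) \<Rightarrow> real" where "tr A = (\<Sum>b\<in>Basis. inner (A b) b)"

lemma tr_add: "tr (\<lambda>w. A w + B w) = tr A + tr B"
  by (simp add: tr_def inner_add_left sum.distrib)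
lemma tr_diff: "tr (\<lambda>w. A w - B w) = tr A - tr B"
  by (simp add: tr_def inner_diff_left sum_subtractf)
lemma tr_scale: "tr (\<lambda>w. c *\<^sub>R A w) = c * tr A"
  by (simp add: tr_def sum_distrib_left)
lemma tr_neg: "tr (\<lambda>w. - A w) = - tr A"
  by (simp add: tr_def sum_negf)

lemma tr_id: "tr (\<lambda>w. w) = real DIM('a)"
  by (simp add: tr_def)

lemma tr_rank:
  assumes lC: "linear C" and CZ: "\<And>w. C w \<in> Z" and lL: "linear L"
  shows "tr (\<lambda>w. L (C w)) = (\<Sum>k\<in>zb. g k k * g (C (L k)) k)"
proof -
  have e: "L (C w) = (\<Sum>k\<in>zb. (g (C w) k * g k k) *\<^sub>R L k)" for w
  proof -
    have "L (C w) = L (Pz (C w))" using CZ by simp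
    also have "\<dots> = (\<Sum>k\<in>zb. L ((g (C w) k * g k k) *\<^sub>R k))" unfolding Pz_def by (rule linear_sum[OF lL])
    also have "\<dots> = (\<Sum>k\<in>zb. (g (C w) k * g k k) *\<^sub>R L k)" by (simp add: linear_scale[OF lL])
    finally show ?thesis .
  qed
  have "tr (\<lambda>w. L (C w)) = (\<Sum>b\<in>Basis. \<Sum>k\<in>zb. g k k * (inner (L k) b * g (C b) k))"
    unfolding tr_def e by (simp add: inner_sum_left inner_sum_right inner_commute mult_ac)
  also have "\<dots> = (\<Sum>k\<in>zb. g k k * (\<Sum>b\<in>Basis. inner (L k) b * g (C b) k))"
    by (subst sum.swap) (simp add: sum_distrib_left)
  also have "\<dots> = (\<Sum>k\<in>zb. g k k * g (C (L k)) k)"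
  proof (rule sum.cong[OF refl])
    fix k
    have "linear (\<lambda>w. g (C w) k)" using linear_compose[OF lC lin_g1[of k]] by (simp add: o_def)
    from expand[OF this, of "L k"] show "g k k * (\<Sum>b\<in>Basis. inner (L k) b * g (C b) k) = g k k * g (C (L k)) k"
      by simp
  qed
  finally show ?thesis .
qed

lemma tr_rankZ: "linear C \<Longrightarrow> (\<And>w. C w \<in> Z) \<Longrightarrow> tr C = (\<Sum>k\<in>zb. g k k * g (C k) k)"
  using tr_rank[of C "\<lambda>x. x"] by (simp add: linear_id[unfolded id_def])

lemma tr_comm: assumes lA: "linear A" and lB: "linear B"
  shows "tr (\<lambda>w. A (B w)) = tr (\<lambda>w. B (A w))"
proof -
  have 1: "inner (A (B b)) b = (\<Sum>c\<in>Basis. inner (B b) c * inner (A c) b)" for b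
  proof -
    have "linear (\<lambda>w. inner (A w) b)" using linear_compose[OF lA bounded_linear.linear[OF bounded_linear_inner_left]]
      by (simp add: o_def)
    from expand[OF this] show ?thesis .
  qed
  have 2: "inner (B (A c)) c = (\<Sum>b\<in>Basis. inner (A c) b * inner (B b) c)" for c
  proof -
    have "linear (\<lambda>w. inner (B w) c)" using linear_compose[OF lB bounded_linear.linear[OF bounded_linear_inner_left]]
      by (simp add: o_def)
    from expand[OF this] show ?thesis .
  qed
  show ?thesis unfolding tr_def 1 2 by (subst sum.swap) (simp add: mult.commute)
qed

definition D :: "'a \<Rightarrow> 'a" where "D b = (SOME u. \<forall>w. inner b w = g u w)"

lemma D_char: "g (D b) w = inner b w"
proof -
  have "linear (inner b)" by (rule bounded_linear.linear[OF bounded_linear_inner_right])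
  from riesz[OF this] have "\<forall>w. inner b w = g (D b) w" unfolding D_def by (rule someI_ex)
  then show ?thesis by simp
qed

lemma D3: "(\<Sum>b\<in>Basis. g x b *\<^sub>R D b) = x"
proof (rule g_unique)
  fix w
  show "g (\<Sum>b\<in>Basis. g x b *\<^sub>R D b) w = g x w"
    using expand[OF lin_g2[of x], of w] by (simp add: D_char inner_commute mult.commute)
qed

lemma tr_skew: assumes lS: "linear S" and sk: "\<And>u w. g (S u) w = - g u (S w)"
  shows "tr S = 0"
proof -
  have Sb: "S b = (\<Sum>c\<in>Basis. g b c *\<^sub>R S (D c))" for b
  proof -
    have "S b = S (\<Sum>c\<in>Basis. g b c *\<^sub>R D c)" using D3 by simp
    also have "\<dots> = (\<Sum>c\<in>Basis. g b c *\<^sub>R S (D c))" by (simp add: linear_sum[OF lS] linear_scale[OF lS])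
    finally show ?thesis .
  qed
  have "tr S = (\<Sum>b\<in>Basis. g (D b) (S b))" unfolding tr_def by (simp add: D_char inner_commute)
  also have "\<dots> = (\<Sum>b\<in>Basis. \<Sum>c\<in>Basis. g b c * g (D b) (S (D c)))"
    by (subst Sb) simp
  also have "\<dots> = (\<Sum>c\<in>Basis. \<Sum>b\<in>Basis. g c b * g (D b) (S (D c)))"
    by (subst sum.swap) (simp add: gsym)
  also have "\<dots> = (\<Sum>c\<in>Basis. g (\<Sum>b\<in>Basis. g c b *\<^sub>R D b) (S (D c)))"
    by simp
  also have "\<dots> = (\<Sum>c\<in>Basis. g c (S (D c)))" by (simp only: D3)
  also have "\<dots> = (\<Sum>c\<in>Basis. - g (D c) (S c))"
    by (rule sum.cong[OF refl]) (metis sk gsym)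
  also have "\<dots> = - tr S" unfolding tr_def by (simp add: D_char inner_commute sum_negf)
  finally show ?thesis by simp
qed


lemma ricci_tr: "ricci g br x y = tr (\<lambda>w. curv g br w x y)"
  by (simp add: ricci_def tr_def)

lemma curv1: "e \<in> V \<Longrightarrow> z \<in> Z \<Longrightarrow> curv g br w e z =
   (1/4) *\<^sub>R J (Pz w) (J z e) - (1/4) *\<^sub>R br w (J z e) + (1/4) *\<^sub>R br e (J z w)"
  unfolding curv_def nabla N_def by (simp add: algebra_simps)

lemma curv2: "e \<in> V \<Longrightarrow> e' \<in> V \<Longrightarrow> curv g br w e e' =
   - (1/4) *\<^sub>R J (br e e') w + (1/4) *\<^sub>R J (br w e') e + (1/4) *\<^sub>R br e (J (Pz w) e')
   + (1/2) *\<^sub>R J (br w e) e'"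
  unfolding curv_def nabla N_def by (simp add: algebra_simps)

lemma curv3: "z \<in> Z \<Longrightarrow> z' \<in> Z \<Longrightarrow> curv g br w z z' = - (1/4) *\<^sub>R J z (J z' w)"
  unfolding curv_def nabla N_def by (simp add: algebra_simps)


lemma ricci1: assumes e: "e \<in> V" and z: "z \<in> Z" shows "ricci g br e z = 0"
proof -
  have t1: "tr (\<lambda>w. J (Pz w) (J z e)) = 0"
    using tr_rank[OF Pz_linear Pz_Z J_lin1[of "J z e"]] by simp
  have t2: "tr (\<lambda>w. br w (J z e)) = 0"
    using tr_rankZ[of "\<lambda>w. br w (J z e)"] by (simp add: linearI)
  have t3: "tr (\<lambda>w. br e (J z w)) = 0"
    using tr_rankZ[of "\<lambda>w. br e (J z w)"] by (simp add: linearI)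
  show ?thesis unfolding ricci_tr curv1[OF e z]
    by (simp only: tr_add tr_diff tr_scale t1 t2 t3 mult_zero_right add_0 diff_0)
qed

definition "xi0 = (\<Sum>k\<in>zb. g k k * \<phi> k)"

lemma xi_sum: "(\<Sum>k\<in>zb. g k k * (\<phi> k * c)) = xi0 * c"
  by (simp add: xi0_def sum_distrib_right sum_distrib_left mult_ac)

lemma JJ1: "k \<in> Z \<Longrightarrow> x \<in> V \<Longrightarrow> g (br (J k x) y) k = - (\<phi> k * g x y)"
  by (simp add: J_char[symmetric] Hj)

lemma JJ2: "k \<in> Z \<Longrightarrow> y \<in> V \<Longrightarrow> g (br x (J k y)) k = \<phi> k * g y x"
proof -
  assume k: "k \<in> Z" and y: "y \<in> V"
  have "g (br x (J k y)) k = g (J k x) (J k y)" by (simp add: J_char)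
  also have "\<dots> = - g (J k (J k y)) x" by (rule J_skew)
  also have "\<dots> = \<phi> k * g y x" using k y by (simp add: Hj)
  finally show ?thesis .
qed

lemma ricci2: assumes e: "e \<in> V" and e': "e' \<in> V" shows "ricci g br e e' = - (xi0 / 2) * g e e'"
proof -
  have t0: "tr (\<lambda>w. J (br e e') w) = 0"
    by (rule tr_skew[OF J_lin2]) (rule J_skew2)
  have t1: "tr (\<lambda>w. J (br w e') e) = - (xi0 * g e e')"
  proof -
    have "tr (\<lambda>w. J (br w e') e) = (\<Sum>k\<in>zb. g k k * g (br (J k e) e') k)"
      using tr_rank[of "\<lambda>w. br w e'" "\<lambda>a. J a e"] J_lin1 by (simp add: linearI)
    also have "\<dots> = (\<Sum>k\<in>zb. g k k * (- (\<phi> k * g e e')))"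
      by (rule sum.cong[OF refl]) (simp add: JJ1 e)
    finally show ?thesis using xi_sum[of "g e e'"] by (simp add: sum_negf)
  qed
  have t2: "tr (\<lambda>w. br e (J (Pz w) e')) = xi0 * g e e'"
  proof -
    have "tr (\<lambda>w. br e (J (Pz w) e')) = (\<Sum>k\<in>zb. g k k * g (Pz (br e (J k e'))) k)"
      using tr_rank[of Pz "\<lambda>a. br e (J a e')"] Pz_linear by (simp add: linearI)
    also have "\<dots> = (\<Sum>k\<in>zb. g k k * (\<phi> k * g e e'))"
      by (rule sum.cong[OF refl]) (simp add: JJ2 e' gsym[of e'])
    finally show ?thesis using xi_sum[of "g e e'"] by simp
  qed
  have t3: "tr (\<lambda>w. J (br w e) e') = - (xi0 * g e e')"
  proof -
    have "tr (\<lambda>w. J (br w e) e') = (\<Sum>k\<in>zb. g k k * g (br (J k e') e) k)"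
      using tr_rank[of "\<lambda>w. br w e" "\<lambda>a. J a e'"] J_lin1 by (simp add: linearI)
    also have "\<dots> = (\<Sum>k\<in>zb. g k k * (- (\<phi> k * g e e')))"
      by (rule sum.cong[OF refl]) (simp add: JJ1 e' gsym[of e'])
    finally show ?thesis using xi_sum[of "g e e'"] by (simp add: sum_negf)
  qed
  show ?thesis unfolding ricci_tr curv2[OF e e']
    by (simp only: tr_add tr_diff tr_scale tr_neg t0 t1 t2 t3)
qed


lemma tr_Pz: "tr Pz = real (card zb)"
proof -
  have "tr Pz = (\<Sum>k\<in>zb. g k k * g (Pz k) k)" by (rule tr_rankZ[OF Pz_linear Pz_Z])
  also have "\<dots> = (\<Sum>k\<in>zb. 1)" by (rule sum.cong[OF refl]) (simp add: zb_sq)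
  finally show ?thesis by simp
qed

lemma anticomm: assumes z: "z \<in> Z" and z': "z' \<in> Z"
  shows "J z (J z' w) + J z' (J z w) = (- (2 * polar \<phi> z z')) *\<^sub>R (w - Pz w)"
proof -
  define x where "x = w - Pz w"
  have xV: "x \<in> V" unfolding x_def by simp
  have jw: "J a w = J a x" for a
  proof -
    have "J a w = J a x + J a (Pz w)" unfolding x_def by simp
    then show ?thesis by simp
  qed
  have zz: "z + z' \<in> Z" using z z' subspace_Z by (simp add: subspace_add)
  have "J (z + z') (J (z + z') x) = - (\<phi> (z + z') *\<^sub>R x)" by (rule Hj[OF zz xV])
  then have "J z (J z x) + J z (J z' x) + J z' (J z x) + J z' (J z' x) = - (\<phi> (z + z') *\<^sub>R x)"
    by (simp add: algebra_simps)
  then have "J z (J z' x) + J z' (J z x) = - ((\<phi> (z + z') - \<phi> z - \<phi> z') *\<^sub>R x)"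
    using Hj[OF z xV] Hj[OF z' xV] by (simp add: algebra_simps)
  then show ?thesis unfolding jw x_def[symmetric] polar_def by simp
qed

lemma ricci3: assumes z: "z \<in> Z" and z': "z' \<in> Z"
  shows "ricci g br z z' = (real DIM('a) - real (card zb)) / 4 * polar \<phi> z z'"
proof -
  have c: "tr (\<lambda>w. J z (J z' w)) = tr (\<lambda>w. J z' (J z w))" by (rule tr_comm[OF J_lin2 J_lin2])
  have "tr (\<lambda>w. J z (J z' w)) + tr (\<lambda>w. J z' (J z w)) = tr (\<lambda>w. (- (2 * polar \<phi> z z')) *\<^sub>R (w - Pz w))"
    unfolding tr_add[symmetric] anticomm[OF z z'] ..
  also have "\<dots> = - (2 * polar \<phi> z z') * (real DIM('a) - real (card zb))"
    by (simp only: tr_scale tr_diff tr_id tr_Pz)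
  finally have "tr (\<lambda>w. J z (J z' w)) = - polar \<phi> z z' * (real DIM('a) - real (card zb))"
    using c by simp
  then show ?thesis unfolding ricci_tr curv3[OF z z'] tr_neg tr_scale by simp
qed

lemma dimV: "real (dim V) = real DIM('a) - real (card zb)"
proof -
  have 1: "{x + y |x y. x \<in> V \<and> y \<in> Z} = UNIV"
  proof -
    have "w \<in> {x + y |x y. x \<in> V \<and> y \<in> Z}" for w
      by (rule CollectI, rule exI[of _ "w - Pz w"], rule exI[of _ "Pz w"]) simp
    then show ?thesis by blast
  qed
  have 2: "V \<inter> Z = {0}"
  proof -
    have "c = 0" if "c \<in> V" "c \<in> Z" for c using ndZ[OF that(2)] V_Z_g1[OF that(1)] by blast
    then show ?thesis using subspace_0[OF subspace_V] subspace_0[OF subspace_Z] by blast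
  qed
  have 3: "dim Z = card zb" using zbprops(3,4) dim_span_eq_card_independent by metis
  have "dim V + dim Z = DIM('a)"
    using dim_sums_Int[OF subspace_V subspace_Z] unfolding 1 2 by simp
  then show ?thesis using 3 by (metis add_diff_cancel_right' of_nat_add diff_add_cancel add_diff_cancel_left')
qed

end

theorem theorem3p4:
  fixes g :: "'a::euclidean_space \<Rightarrow> 'a \<Rightarrow> real"
    and br :: "'a \<Rightarrow> 'a \<Rightarrow> 'a"
    and \<phi> :: "'a \<Rightarrow> real"
    and zb :: "'a set"
    and \<xi> :: real and m :: nat
  assumes "modified_H_type g br \<phi>"
    and "pseudo_orthonormal_basis g (lie_center br) zb"
    and "\<xi> = (\<Sum>zk\<in>zb. g zk zk * \<phi> zk)"
    and "m = dim (g_orth g (lie_center br))"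
  shows "(\<forall>e\<in>g_orth g (lie_center br). \<forall>z\<in>lie_center br. ricci g br e z = 0)
    \<and> (\<forall>e\<in>g_orth g (lie_center br). \<forall>e'\<in>g_orth g (lie_center br).
          ricci g br e e' = - (\<xi> / 2) * g e e')
    \<and> (\<forall>z\<in>lie_center br. \<forall>z'\<in>lie_center br. ricci g br z z' = real m / 4 * polar \<phi> z z')"
proof -
  interpret mh g br \<phi> zb using assms(1,2) by unfold_locales
  have x: "\<xi> = xi0" using assms(3) by (simp add: xi0_def)
  have m: "real m = real DIM('a) - real (card zb)" using assms(4) dimV by simp
  show ?thesis using ricci1 ricci2 ricci3 unfolding x m by blast
qed

end
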